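(* Let $I\subset\mathbb R$ be a bounded closed non-degenerate interval, $r\ge1$, and let $f:I\to\overline{\mathbb R}$ be non-decreasing with $f\in L^r(I)$. Let $a,b\in\mathbb R$ with $a<b$. Then the function $$\psi(\xi)=\big\|f-\big(a\mathbf 1_{[\min I,\xi[}+b\mathbf 1_{[\xi,\max I]}\big)\big\|_{L^r(I)},\qquad \xi\in I,$$ attains its minimal value at $\xi$ if and only if $\xi\in Q^f_{(a+b)/2}$.
   Context: For a non-decreasing $f:I\to\overline{\mathbb R}$ on a closed non-degenerate interval $I$ and $t\in\overline{\mathbb R}$, the $t$-quantile set is $Q^f_t=[\inf\{x\in I:f(x)\ge t\},\ \sup\{x\in I:f(x)\le t\}]$, with the conventions $\inf\varnothing=\max I$, $\sup\varnothing=\min I$. *)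

theory Defs
  imports "HOL-Analysis.Analysis"
begin

definition in_Lr :: "real \<Rightarrow> real \<Rightarrow> real \<Rightarrow> (real \<Rightarrow> ereal) \<Rightarrow> bool" where
  "in_Lr r lo hi f \<longleftrightarrow>
     f \<in> borel_measurable (lebesgue_on {lo..hi}) \<and>
     (AE x in lebesgue_on {lo..hi}. \<bar>f x\<bar> \<noteq> \<infinity>) \<and>
     integrable (lebesgue_on {lo..hi}) (\<lambda>x. \<bar>real_of_ereal (f x)\<bar> powr r)"

definition Lr_dist :: "real \<Rightarrow> real \<Rightarrow> real \<Rightarrow> (real \<Rightarrow> ereal) \<Rightarrow> (real \<Rightarrow> real) \<Rightarrow> real" where
  "Lr_dist r lo hi f g =
     (integral\<^sup>L (lebesgue_on {lo..hi}) (\<lambda>x. \<bar>real_of_ereal (f x) - g x\<bar> powr r)) powr (1 / r)"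

definition step_fun :: "real \<Rightarrow> real \<Rightarrow> real \<Rightarrow> real \<Rightarrow> real" where
  "step_fun a b xi x = (if x < xi then a else b)"

definition quantile_set :: "real \<Rightarrow> real \<Rightarrow> (real \<Rightarrow> ereal) \<Rightarrow> ereal \<Rightarrow> real set" where
  "quantile_set lo hi f t =
     {(if {x\<in>{lo..hi}. f x \<ge> t} = {} then hi else Inf {x\<in>{lo..hi}. f x \<ge> t}) ..
      (if {x\<in>{lo..hi}. f x \<le> t} = {} then lo else Sup {x\<in>{lo..hi}. f x \<le> t})}"

end

theory Submission
  imports Defs
begin

lemma h_neg_iff:
  fixes a b y r :: real
  assumes "a < b" "r > 0"
  shows "\<bar>y - a\<bar> powr r - \<bar>y - b\<bar> powr r < 0 \<longleftrightarrow> y < (a+b)/2"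
proof -
  have "\<bar>y - a\<bar> powr r < \<bar>y - b\<bar> powr r \<longleftrightarrow> \<bar>y - a\<bar> < \<bar>y - b\<bar>"
  proof
    assume h: "\<bar>y - a\<bar> powr r < \<bar>y - b\<bar> powr r"
    show "\<bar>y - a\<bar> < \<bar>y - b\<bar>"
    proof (rule ccontr)
      assume "\<not> ?thesis"
      then have "\<bar>y - b\<bar> powr r \<le> \<bar>y - a\<bar> powr r"
        using assms by (intro powr_mono2) auto
      with h show False by linarith
    qed
  next
    assume "\<bar>y - a\<bar> < \<bar>y - b\<bar>"
    then show "\<bar>y - a\<bar> powr r < \<bar>y - b\<bar> powr r"
      using assms by (intro powr_less_mono2) auto
  qed
  also have "\<dots> \<longleftrightarrow> y < (a+b)/2" using assms by (auto simp: abs_if)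
  finally show ?thesis by linarith
qed

lemma h_le_iff:
  fixes a b y r :: real
  assumes "a < b" "r > 0"
  shows "\<bar>y - a\<bar> powr r - \<bar>y - b\<bar> powr r \<le> 0 \<longleftrightarrow> y \<le> (a+b)/2"
proof -
  have "\<bar>y - a\<bar> powr r \<le> \<bar>y - b\<bar> powr r \<longleftrightarrow> \<bar>y - a\<bar> \<le> \<bar>y - b\<bar>"
  proof
    assume h: "\<bar>y - a\<bar> powr r \<le> \<bar>y - b\<bar> powr r"
    show "\<bar>y - a\<bar> \<le> \<bar>y - b\<bar>"
    proof (rule ccontr)
      assume "\<not> ?thesis"
      then have "\<bar>y - b\<bar> powr r < \<bar>y - a\<bar> powr r"
        using assms by (intro powr_less_mono2) auto
      with h show False by linarith
    qed
  next
    assume "\<bar>y - a\<bar> \<le> \<bar>y - b\<bar>"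
    then show "\<bar>y - a\<bar> powr r \<le> \<bar>y - b\<bar> powr r"
      using assms by (intro powr_mono2) auto
  qed
  also have "\<dots> \<longleftrightarrow> y \<le> (a+b)/2" using assms by (auto simp: abs_if)
  finally show ?thesis by linarith
qed

lemma AE_ne_point:
  "(l::real) \<in> {lo..hi} \<Longrightarrow> AE x in lebesgue_on {lo..hi}. x \<noteq> l"
  apply (rule AE_discrete_difference[where X="{l}", simplified])
  apply (subst emeasure_restrict_space) apply (auto simp: sets_restrict_space_iff)
  done

lemma not_AE_Ioo:
  "lo \<le> (l::real) \<Longrightarrow> u \<le> hi \<Longrightarrow> l < u \<Longrightarrow> \<not> (AE x in lebesgue_on {lo..hi}. x \<notin> {l<..<u})"
  apply (subst AE_iff_measurable[where N="{l<..<u}"])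
  apply (auto simp: sets_restrict_space_iff)
  apply (subst (asm) emeasure_restrict_space) apply auto
  done

lemma integral_pos_lemma:
  fixes g :: "real \<Rightarrow> real"
  assumes "integrable (lebesgue_on {lo..hi}) g"
    and "AE x in lebesgue_on {lo..hi}. 0 \<le> g x"
    and "AE x in lebesgue_on {lo..hi}. x \<in> {l<..<u} \<longrightarrow> 0 < g x"
    and "lo \<le> l" "u \<le> hi" "l < u"
  shows "0 < integral\<^sup>L (lebesgue_on {lo..hi}) g"
proof -
  have ge: "0 \<le> integral\<^sup>L (lebesgue_on {lo..hi}) g"
    using assms(2) by (rule integral_nonneg_AE)
  have "integral\<^sup>L (lebesgue_on {lo..hi}) g \<noteq> 0"
  proof
    assume "integral\<^sup>L (lebesgue_on {lo..hi}) g = 0"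
    then have "AE x in lebesgue_on {lo..hi}. g x = 0"
      using integral_nonneg_eq_0_iff_AE[OF assms(1,2)] by simp
    with assms(3) have "AE x in lebesgue_on {lo..hi}. x \<notin> {l<..<u}"
      by eventually_elim auto
    with not_AE_Ioo[OF assms(4-6)] show False by blast
  qed
  with ge show ?thesis by linarith
qed


lemma powr_le_iff2:
  fixes x y p :: real
  assumes "0 \<le> x" "0 \<le> y" "p > 0"
  shows "x powr p \<le> y powr p \<longleftrightarrow> x \<le> y"
proof
  assume h: "x powr p \<le> y powr p"
  show "x \<le> y"
  proof (rule ccontr)
    assume "\<not> x \<le> y"
    then have "y powr p < x powr p" using assms by (intro powr_less_mono2) auto
    with h show False by linarith
  qed
next
  assume "x \<le> y" then show "x powr p \<le> y powr p" using assms by (intro powr_mono2) auto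
qed

lemma Lr_integrable:
  assumes "in_Lr r lo hi f" "r > 0"
  shows "integrable (lebesgue_on {lo..hi}) (\<lambda>x. \<bar>real_of_ereal (f x) - c\<bar> powr r)"
proof -
  have meas: "(\<lambda>x. real_of_ereal (f x)) \<in> borel_measurable (lebesgue_on {lo..hi})"
    using assms unfolding in_Lr_def by (auto intro: measurable_compose[OF _ borel_measurable_real_of_ereal])
  have fin: "finite_measure (lebesgue_on {lo..hi})"
    by (rule finite_measure_lebesgue_on) simp
  have int1: "integrable (lebesgue_on {lo..hi}) (\<lambda>x. \<bar>real_of_ereal (f x)\<bar> powr r)"
    using assms unfolding in_Lr_def by auto
  have int2: "integrable (lebesgue_on {lo..hi}) (\<lambda>x. 2 powr r * (\<bar>real_of_ereal (f x)\<bar> powr r + \<bar>c\<bar> powr r))"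
    using int1 finite_measure.integrable_const[OF fin] by (intro integrable_mult_right integrable_add) auto
  show ?thesis
  proof (rule Bochner_Integration.integrable_bound[OF int2])
    show "(\<lambda>x. \<bar>real_of_ereal (f x) - c\<bar> powr r) \<in> borel_measurable (lebesgue_on {lo..hi})"
      using meas by measurable
    show "AE x in lebesgue_on {lo..hi}. norm (\<bar>real_of_ereal (f x) - c\<bar> powr r)
        \<le> norm (2 powr r * (\<bar>real_of_ereal (f x)\<bar> powr r + \<bar>c\<bar> powr r))"
    proof (rule AE_I2)
      fix x
      define y where "y = real_of_ereal (f x)"
      have "\<bar>y - c\<bar> \<le> 2 * max \<bar>y\<bar> \<bar>c\<bar>" by auto
      then have "\<bar>y - c\<bar> powr r \<le> (2 * max \<bar>y\<bar> \<bar>c\<bar>) powr r"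
        using assms by (intro powr_mono2) auto
      also have "\<dots> = 2 powr r * max \<bar>y\<bar> \<bar>c\<bar> powr r"
        by (subst powr_mult) auto
      also have "max \<bar>y\<bar> \<bar>c\<bar> powr r \<le> \<bar>y\<bar> powr r + \<bar>c\<bar> powr r"
        by (auto simp: max_def)
      then have "2 powr r * max \<bar>y\<bar> \<bar>c\<bar> powr r \<le> 2 powr r * (\<bar>y\<bar> powr r + \<bar>c\<bar> powr r)"
        by (intro mult_left_mono) auto
      finally show "norm (\<bar>real_of_ereal (f x) - c\<bar> powr r)
        \<le> norm (2 powr r * (\<bar>real_of_ereal (f x)\<bar> powr r + \<bar>c\<bar> powr r))"
        unfolding y_def by simp
    qed
  qed
qed

lemma sets_Ico_in:
  "{x\<in>{lo..hi}. l \<le> x \<and> x < (u::real)} \<in> sets (lebesgue_on {lo..hi})"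
  "{x\<in>{lo..hi}. x < (u::real)} \<in> sets (lebesgue_on {lo..hi})"
proof -
  have "{x\<in>{lo..hi}. l \<le> x \<and> x < (u::real)} = {lo..hi} \<inter> {l..<u}" by auto
  then show "{x\<in>{lo..hi}. l \<le> x \<and> x < (u::real)} \<in> sets (lebesgue_on {lo..hi})"
    by (auto simp: sets_restrict_space_iff)
  have "{x\<in>{lo..hi}. x < (u::real)} = {lo..hi} \<inter> {..<u}" by auto
  then show "{x\<in>{lo..hi}. x < (u::real)} \<in> sets (lebesgue_on {lo..hi})"
    by (auto simp: sets_restrict_space_iff)
qed

theorem lemma4p1:
  fixes lo hi r a b xi :: real and f :: "real \<Rightarrow> ereal"
  assumes "lo < hi" and "r \<ge> 1"
    and "mono_on {lo..hi} f" and "in_Lr r lo hi f"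
    and "a < b" and "xi \<in> {lo..hi}"
  shows "(\<forall>eta\<in>{lo..hi}. Lr_dist r lo hi f (step_fun a b xi) \<le> Lr_dist r lo hi f (step_fun a b eta))
         \<longleftrightarrow> xi \<in> quantile_set lo hi f (ereal ((a + b) / 2))"
proof -
  let ?I = "{lo..hi}"
  let ?M = "lebesgue_on {lo..hi}"
  define F where "F x = real_of_ereal (f x)" for x
  define hF where "hF x = \<bar>F x - a\<bar> powr r - \<bar>F x - b\<bar> powr r" for x
  define m where "m = (a + b) / 2"
  define phi where "phi eta = integral\<^sup>L ?M (\<lambda>x. \<bar>F x - step_fun a b eta x\<bar> powr r)" for eta
  define g where "g l u x = hF x * indicator {x\<in>?I. l \<le> x \<and> x < u} x" for l u x
  have r0: "r > 0" using assms(2) by simp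
  have AEfin: "AE x in ?M. \<bar>f x\<bar> \<noteq> \<infinity>" using assms(4) unfolding in_Lr_def by auto
  have intc: "integrable ?M (\<lambda>x. \<bar>F x - c\<bar> powr r)" for c
    unfolding F_def using Lr_integrable[OF assms(4) r0] .
  have inth: "integrable ?M hF"
    unfolding hF_def using intc by (intro Bochner_Integration.integrable_diff)
  have intg: "integrable ?M (g l u)" for l u
    unfolding g_def by (intro integrable_real_mult_indicator sets_Ico_in inth)
  have intA: "integrable ?M (\<lambda>x. hF x * indicator {x\<in>?I. x < u} x)" for u
    by (intro integrable_real_mult_indicator sets_Ico_in inth)
  have phi_eq: "phi eta = integral\<^sup>L ?M (\<lambda>x. \<bar>F x - b\<bar> powr r) + integral\<^sup>L ?M (\<lambda>x. hF x * indicator {x\<in>?I. x < eta} x)" for eta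
  proof -
    have "phi eta = integral\<^sup>L ?M (\<lambda>x. \<bar>F x - b\<bar> powr r + hF x * indicator {x\<in>?I. x < eta} x)"
      unfolding phi_def
      by (rule Bochner_Integration.integral_cong) (auto simp: step_fun_def hF_def indicator_def)
    also have "\<dots> = integral\<^sup>L ?M (\<lambda>x. \<bar>F x - b\<bar> powr r) + integral\<^sup>L ?M (\<lambda>x. hF x * indicator {x\<in>?I. x < eta} x)"
      by (rule Bochner_Integration.integral_add[OF intc intA])
    finally show ?thesis .
  qed
  have diff: "phi u - phi l = integral\<^sup>L ?M (g l u)" if "l \<le> u" for l u
  proof -
    have "phi u - phi l = integral\<^sup>L ?M (\<lambda>x. hF x * indicator {x\<in>?I. x < u} x) - integral\<^sup>L ?M (\<lambda>x. hF x * indicator {x\<in>?I. x < l} x)"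
      using phi_eq by simp
    also have "\<dots> = integral\<^sup>L ?M (\<lambda>x. hF x * indicator {x\<in>?I. x < u} x - hF x * indicator {x\<in>?I. x < l} x)"
      by (rule Bochner_Integration.integral_diff[symmetric, OF intA intA])
    also have "\<dots> = integral\<^sup>L ?M (g l u)"
      unfolding g_def using that
      by (intro Bochner_Integration.integral_cong) (auto simp: indicator_def)
    finally show ?thesis .
  qed
  have phi_nn: "0 \<le> phi eta" for eta
    unfolding phi_def by (rule Bochner_Integration.integral_nonneg) auto
  have Lr_phi: "Lr_dist r lo hi f (step_fun a b eta) = phi eta powr (1/r)" for eta
    unfolding Lr_dist_def phi_def F_def ..
  have fe: "f x = ereal (F x)" if "\<bar>f x\<bar> \<noteq> \<infinity>" for x
    unfolding F_def using that by (simp add: ereal_real')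
  have s_ge: "0 \<le> hF x" if "\<bar>f x\<bar> \<noteq> \<infinity>" "ereal m \<le> f x" for x
  proof -
    have "m \<le> F x" using that fe[OF that(1)] by simp
    then show ?thesis using h_neg_iff[OF assms(5) r0, of "F x"] unfolding hF_def m_def by linarith
  qed
  have s_le: "hF x \<le> 0" if "\<bar>f x\<bar> \<noteq> \<infinity>" "f x \<le> ereal m" for x
  proof -
    have "F x \<le> m" using that fe[OF that(1)] by simp
    then show ?thesis using h_le_iff[OF assms(5) r0, of "F x"] unfolding hF_def m_def by linarith
  qed
  have s_lt: "hF x < 0" if "\<bar>f x\<bar> \<noteq> \<infinity>" "f x < ereal m" for x
  proof -
    have "F x < m" using that fe[OF that(1)] by simp
    then show ?thesis using h_neg_iff[OF assms(5) r0, of "F x"] unfolding hF_def m_def by linarith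
  qed
  have s_gt: "0 < hF x" if "\<bar>f x\<bar> \<noteq> \<infinity>" "ereal m < f x" for x
  proof -
    have "m < F x" using that fe[OF that(1)] by simp
    then show ?thesis using h_le_iff[OF assms(5) r0, of "F x"] unfolding hF_def m_def by linarith
  qed
  define S1 where "S1 = {x\<in>?I. ereal m \<le> f x}"
  define S2 where "S2 = {x\<in>?I. f x \<le> ereal m}"
  define c where "c = (if S1 = {} then hi else Inf S1)"
  define d where "d = (if S2 = {} then lo else Sup S2)"
  have Q: "quantile_set lo hi f (ereal ((a + b) / 2)) = {c..d}"
    unfolding quantile_set_def c_def d_def S1_def S2_def m_def by simp
  have bb1: "bdd_below S1" unfolding S1_def by (rule bdd_belowI[of _ lo]) auto
  have ba2: "bdd_above S2" unfolding S2_def by (rule bdd_aboveI[of _ hi]) auto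
  have c_in: "c \<in> ?I"
  proof (cases "S1 = {}")
    case True then show ?thesis using assms(1) unfolding c_def by simp
  next
    case False
    then obtain y where y: "y \<in> S1" by blast
    have "Inf S1 \<le> y" using cInf_lower[OF y bb1] .
    moreover have "lo \<le> Inf S1" using False by (intro cInf_greatest) (auto simp: S1_def)
    ultimately show ?thesis using False y unfolding c_def S1_def by auto
  qed
  have d_in: "d \<in> ?I"
  proof (cases "S2 = {}")
    case True then show ?thesis using assms(1) unfolding d_def by simp
  next
    case False
    then obtain y where y: "y \<in> S2" by blast
    have "y \<le> Sup S2" using cSup_upper[OF y ba2] .
    moreover have "Sup S2 \<le> hi" using False by (intro cSup_least) (auto simp: S2_def)
    ultimately show ?thesis using False y unfolding d_def S2_def by auto
  qed
  have c_lt: "f x < ereal m" if "x \<in> ?I" "x < c" for x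
  proof (cases "S1 = {}")
    case True then show ?thesis using that unfolding S1_def by auto
  next
    case False
    have "x \<notin> S1" using cInf_lower[OF _ bb1, of x] that False unfolding c_def by auto
    then show ?thesis using that unfolding S1_def by auto
  qed
  have c_gt: "ereal m \<le> f x" if "x \<in> ?I" "c < x" for x
  proof (cases "S1 = {}")
    case True then show ?thesis using that unfolding c_def by auto
  next
    case False
    then have "Inf S1 < x" using that unfolding c_def by simp
    then obtain y where y: "y \<in> S1" "y < x" using cInf_lessD[OF False] by blast
    then have "f y \<le> f x" using that assms(3) unfolding S1_def by (auto intro: mono_onD)
    with y show ?thesis unfolding S1_def by auto
  qed
  have d_gt: "ereal m < f x" if "x \<in> ?I" "d < x" for x
  proof (cases "S2 = {}")
    case True then show ?thesis using that unfolding S2_def by auto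
  next
    case False
    have "x \<notin> S2" using cSup_upper[OF _ ba2, of x] that False unfolding d_def by auto
    then show ?thesis using that unfolding S2_def by auto
  qed
  have d_lt: "f x \<le> ereal m" if "x \<in> ?I" "x < d" for x
  proof (cases "S2 = {}")
    case True then show ?thesis using that unfolding d_def by auto
  next
    case False
    then have "x < Sup S2" using that unfolding d_def by simp
    then obtain y where y: "y \<in> S2" "x < y" using less_cSupD[OF False] by blast
    then have "f x \<le> f y" using that assms(3) unfolding S2_def by (auto intro: mono_onD)
    with y show ?thesis unfolding S2_def by auto
  qed
  have key: "(\<forall>eta\<in>?I. phi xi \<le> phi eta) \<longleftrightarrow> xi \<in> {c..d}"
  proof
    assume min: "\<forall>eta\<in>?I. phi xi \<le> phi eta"
    show "xi \<in> {c..d}"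
    proof (rule ccontr)
      assume "xi \<notin> {c..d}"
      then consider "xi < c" | "d < xi" by auto
      then show False
      proof cases
        case 1
        have "0 < integral\<^sup>L ?M (\<lambda>x. - g xi c x)"
        proof (rule integral_pos_lemma)
          show "integrable ?M (\<lambda>x. - g xi c x)" using intg by simp
          show "AE x in ?M. 0 \<le> - g xi c x"
            using AEfin
          proof eventually_elim
            case (elim x)
            then show ?case using s_lt[OF elim, of ] c_lt unfolding g_def
              by (auto simp: indicator_def less_imp_le)
          qed
          show "AE x in ?M. x \<in> {xi<..<c} \<longrightarrow> 0 < - g xi c x"
            using AEfin
          proof eventually_elim
            case (elim x)
            then show ?case using s_lt[OF elim] c_lt assms(6) c_in unfolding g_def
              by (auto simp: indicator_def)
          qed
        qed (use 1 assms(6) c_in in auto)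
        then have "integral\<^sup>L ?M (g xi c) < 0" by simp
        with diff[of xi c] 1 have "phi c < phi xi" by simp
        with min c_in show False by force
      next
        case 2
        have "0 < integral\<^sup>L ?M (g d xi)"
        proof (rule integral_pos_lemma)
          show "integrable ?M (g d xi)" using intg by simp
          show "AE x in ?M. 0 \<le> g d xi x"
            using AEfin AE_ne_point[OF d_in]
          proof eventually_elim
            case (elim x)
            then show ?case using s_gt[OF elim(1)] d_gt unfolding g_def
              by (auto simp: indicator_def less_imp_le)
          qed
          show "AE x in ?M. x \<in> {d<..<xi} \<longrightarrow> 0 < g d xi x"
            using AEfin
          proof eventually_elim
            case (elim x)
            then show ?case using s_gt[OF elim] d_gt assms(6) d_in unfolding g_def
              by (auto simp: indicator_def)
          qed
        qed (use 2 assms(6) d_in in auto)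
        with diff[of d xi] 2 have "phi d < phi xi" by simp
        with min d_in show False by force
      qed
    qed
  next
    assume xq: "xi \<in> {c..d}"
    show "\<forall>eta\<in>?I. phi xi \<le> phi eta"
    proof
      fix eta assume eta: "eta \<in> ?I"
      show "phi xi \<le> phi eta"
      proof (cases "xi \<le> eta")
        case True
        have "0 \<le> integral\<^sup>L ?M (g xi eta)"
        proof (rule integral_nonneg_AE)
          show "AE x in ?M. 0 \<le> g xi eta x"
            using AEfin AE_ne_point[OF assms(6)]
          proof eventually_elim
            case (elim x)
            then show ?case using s_ge[OF elim(1)] c_gt xq unfolding g_def
              by (auto simp: indicator_def)
          qed
        qed
        with diff[OF True] show ?thesis by simp
      next
        case False
        have "0 \<le> integral\<^sup>L ?M (\<lambda>x. - g eta xi x)"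
        proof (rule integral_nonneg_AE)
          show "AE x in ?M. 0 \<le> - g eta xi x"
            using AEfin
          proof eventually_elim
            case (elim x)
            then show ?case using s_le[OF elim] d_lt xq unfolding g_def
              by (auto simp: indicator_def)
          qed
        qed
        then have "integral\<^sup>L ?M (g eta xi) \<le> 0" by simp
        with diff[of eta xi] False show ?thesis by simp
      qed
    qed
  qed
  have "(\<forall>eta\<in>?I. Lr_dist r lo hi f (step_fun a b xi) \<le> Lr_dist r lo hi f (step_fun a b eta))
      \<longleftrightarrow> (\<forall>eta\<in>?I. phi xi \<le> phi eta)"
    unfolding Lr_phi using powr_le_iff2[OF phi_nn phi_nn, of "1/r"] r0 by simp
  then show ?thesis using key Q by simp
qed

end
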